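(* Let $A,B\subset\{0,1\}^n$ be increasing events, let $\omega,\xi$ be independent uniform random elements of $\{0,1\}^n$. Then $$\mathrm P[A\circ B]\le\mathbb P[(A,B)\text{ occurs disjointly on }(\omega,\xi)]\le\mathrm P[A]\,\mathrm P[B].$$
   Context: $\mathrm P$ is the uniform measure on $\{0,1\}^n$. $(x,I)$ is a witness for $A$ if $\{y: y|_I=x|_I\}\subset A$; $(A,B)$ occurs disjointly on $(x,y)$ if there are disjoint $I,J\subset[n]$ with $(x,I)$ a witness for $A$ and $(y,J)$ a witness for $B$; $A\circ B=\{x:(A,B)\text{ occurs disjointly on }(x,x)\}$. An event is increasing if its indicator is increasing for the coordinatewise order. *)

theory Defs
  imports Complex_Main
begin

text \<open>The hypercube {0,1}^n: elements are boolean functions on nat that vanish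
  (are False) outside {..<n}; True encodes 1.\<close>
definition cube :: "nat \<Rightarrow> (nat \<Rightarrow> bool) set" where
  "cube n = {x. \<forall>i. n \<le> i \<longrightarrow> \<not> x i}"

definition P :: "nat \<Rightarrow> (nat \<Rightarrow> bool) set \<Rightarrow> real" where
  "P n A = real (card (A \<inter> cube n)) / 2 ^ n"

definition P2 :: "nat \<Rightarrow> ((nat \<Rightarrow> bool) \<times> (nat \<Rightarrow> bool)) set \<Rightarrow> real" where
  "P2 n E = real (card (E \<inter> (cube n \<times> cube n))) / (2 ^ n * 2 ^ n)"

definition increasing :: "nat \<Rightarrow> (nat \<Rightarrow> bool) set \<Rightarrow> bool" where
  "increasing n A \<longleftrightarrow> A \<subseteq> cube n \<and>
     (\<forall>x\<in>A. \<forall>y\<in>cube n. (\<forall>i<n. x i \<longrightarrow> y i) \<longrightarrow> y \<in> A)"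

definition witness :: "nat \<Rightarrow> (nat \<Rightarrow> bool) set \<Rightarrow> (nat \<Rightarrow> bool) \<Rightarrow> nat set \<Rightarrow> bool" where
  "witness n A x I \<longleftrightarrow> I \<subseteq> {..<n} \<and> {y\<in>cube n. \<forall>i\<in>I. y i = x i} \<subseteq> A"

definition occurs_disjointly ::
  "nat \<Rightarrow> (nat \<Rightarrow> bool) set \<Rightarrow> (nat \<Rightarrow> bool) set \<Rightarrow> (nat \<Rightarrow> bool) \<Rightarrow> (nat \<Rightarrow> bool) \<Rightarrow> bool" where
  "occurs_disjointly n A B x y \<longleftrightarrow>
     (\<exists>I J. I \<subseteq> {..<n} \<and> J \<subseteq> {..<n} \<and> I \<inter> J = {} \<and> witness n A x I \<and> witness n B y J)"

definition box :: "nat \<Rightarrow> (nat \<Rightarrow> bool) set \<Rightarrow> (nat \<Rightarrow> bool) set \<Rightarrow> (nat \<Rightarrow> bool) set" where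
  "box n A B = {x\<in>cube n. occurs_disjointly n A B x x}"

end

theory Submission
  imports Defs
begin

lemma cube_img: "cube n = (\<lambda>S i. i \<in> S) ` Pow {..<n}"
proof
  show "cube n \<subseteq> (\<lambda>S i. i \<in> S) ` Pow {..<n}"
  proof
    fix x assume x: "x \<in> cube n"
    have "x = (\<lambda>i. i \<in> {i. i < n \<and> x i})"
      using x by (auto simp: cube_def not_less[symmetric])
    moreover have "{i. i < n \<and> x i} \<in> Pow {..<n}" by auto
    ultimately show "x \<in> (\<lambda>S i. i \<in> S) ` Pow {..<n}" by blast
  qed
qed (auto simp: cube_def)

lemma card_cube: "card (cube n) = 2 ^ n"
proof -
  have "inj_on (\<lambda>S i. i \<in> S) (Pow {..<n})"
    by (auto simp: inj_on_def fun_eq_iff)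
  then show ?thesis unfolding cube_img
    by (simp add: card_image card_Pow)
qed

lemma finite_cube: "finite (cube n)"
  unfolding cube_img by simp

lemma witness_drop:
  assumes "increasing n A" "witness n A x I" "\<not> x k"
  shows "witness n A x (I - {k})"
  unfolding witness_def
proof (rule conjI)
  show "I - {k} \<subseteq> {..<n}" using assms(2) by (auto simp: witness_def)
next
  show "{y \<in> cube n. \<forall>i\<in>I - {k}. y i = x i} \<subseteq> A"
  proof
  fix y assume "y \<in> {y \<in> cube n. \<forall>i\<in>I - {k}. y i = x i}"
  then have y: "y \<in> cube n" "\<forall>i\<in>I - {k}. y i = x i" by auto
  define y' where "y' = y(k := False)"
  have kn: "k < n \<Longrightarrow> y' \<in> cube n" using y by (auto simp: y'_def cube_def)
  show "y \<in> A"
  proof (cases "k < n")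
    case True
    have "y' \<in> A" using assms(2,3) y kn[OF True] unfolding witness_def y'_def
      by (smt (verit, best) DiffI fun_upd_other fun_upd_same mem_Collect_eq singletonD subset_iff)
    then show ?thesis using assms(1) y unfolding increasing_def y'_def by auto
  next
    case False
    then have "k \<notin> I" using assms(2) by (auto simp: witness_def)
    then show ?thesis using assms(2) y unfolding witness_def by auto
  qed
  qed
qed

lemma witness_agree:
  assumes "witness n A x I" "\<forall>i\<in>I. y i = x i"
  shows "witness n A y I"
  using assms unfolding witness_def by auto

definition mix :: "nat \<Rightarrow> (nat \<Rightarrow> bool) \<Rightarrow> (nat \<Rightarrow> bool) \<Rightarrow> nat \<Rightarrow> bool" where
  "mix k w z = (\<lambda>i. if i < k then z i else w i)"

definition Dk where "Dk n A B k p = occurs_disjointly n A B (fst p) (mix k (fst p) (snd p))"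

lemma L1:
  assumes incA: "increasing n A" and incB: "increasing n B"
    and D: "occurs_disjointly n A B w (mix k w z)" and wk: "\<not> w k"
    and w': "\<forall>i. i \<noteq> k \<longrightarrow> w' i = w i" and z': "\<forall>i. i \<noteq> k \<longrightarrow> z' i = z i"
  shows "occurs_disjointly n A B w' (mix (Suc k) w' z')"
proof -
  obtain I J where IJ: "I \<subseteq> {..<n}" "J \<subseteq> {..<n}" "I \<inter> J = {}"
    "witness n A w I" "witness n B (mix k w z) J"
    using D unfolding occurs_disjointly_def by blast
  have a: "witness n A w (I - {k})" using witness_drop[OF incA IJ(4) wk] .
  have b: "witness n B (mix k w z) (J - {k})"
    using witness_drop[OF incB IJ(5)] wk by (simp add: mix_def)
  have a': "witness n A w' (I - {k})" using witness_agree[OF a] w' by auto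
  have b': "witness n B (mix (Suc k) w' z') (J - {k})"
    using witness_agree[OF b] w' z' by (auto simp: mix_def)
  show ?thesis unfolding occurs_disjointly_def
    using a' b' IJ by (intro exI[of _ "I - {k}"] exI[of _ "J - {k}"]) auto
qed

lemma L2:
  assumes incA: "increasing n A" and incB: "increasing n B"
    and D: "occurs_disjointly n A B w (mix k w z)"
    and nD: "\<not> occurs_disjointly n A B w (mix (Suc k) w z)"
  shows "w k \<and> \<not> z k \<and> occurs_disjointly n A B (w(k := False)) (mix (Suc k) (w(k := False)) (z(k := True)))"
proof -
  have wk: "w k" using L1[OF incA incB D, of w z] nD by auto
  obtain I J where IJ: "I \<subseteq> {..<n}" "J \<subseteq> {..<n}" "I \<inter> J = {}"
    "witness n A w I" "witness n B (mix k w z) J"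
    using D unfolding occurs_disjointly_def by blast
  have kJ: "k \<in> J"
  proof (rule ccontr)
    assume "k \<notin> J"
    then have "witness n B (mix (Suc k) w z) J"
      using witness_agree[OF IJ(5), of "mix (Suc k) w z"] by (auto simp: mix_def less_Suc_eq)
    then show False using nD IJ unfolding occurs_disjointly_def by blast
  qed
  have zk: "\<not> z k"
  proof
    assume "z k"
    then have "witness n B (mix (Suc k) w z) J"
      using witness_agree[OF IJ(5), of "mix (Suc k) w z"] wk by (auto simp: mix_def less_Suc_eq)
    then show False using nD IJ unfolding occurs_disjointly_def by blast
  qed
  have kI: "k \<notin> I" using kJ IJ(3) by auto
  have a: "witness n A (w(k := False)) I" using witness_agree[OF IJ(4)] kI by auto
  have b: "witness n B (mix (Suc k) (w(k := False)) (z(k := True))) J"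
    using witness_agree[OF IJ(5), of "mix (Suc k) (w(k := False)) (z(k := True))"] wk
    by (auto simp: mix_def less_Suc_eq)
  show ?thesis using wk zk a b IJ unfolding occurs_disjointly_def by blast
qed

definition tau :: "nat \<Rightarrow> (nat \<Rightarrow> bool) \<times> (nat \<Rightarrow> bool) \<Rightarrow> (nat \<Rightarrow> bool) \<times> (nat \<Rightarrow> bool)" where
  "tau k p = ((fst p)(k := snd p k), (snd p)(k := fst p k))"

lemma tau_inv: "tau k (tau k p) = p"
  by (cases p) (auto simp: tau_def)

lemma step:
  assumes incA: "increasing n A" and incB: "increasing n B"
  shows "card {p \<in> cube n \<times> cube n. Dk n A B k p} \<le> card {p \<in> cube n \<times> cube n. Dk n A B (Suc k) p}"
proof -
  define S where "S = {p \<in> cube n \<times> cube n. Dk n A B k p}"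
  define T where "T = {p \<in> cube n \<times> cube n. Dk n A B (Suc k) p}"
  have fin: "finite S" "finite T" unfolding S_def T_def using finite_cube by auto
  have img: "tau k ` (S - T) \<subseteq> T - S"
  proof
    fix q assume "q \<in> tau k ` (S - T)"
    then obtain p where p: "p \<in> S" "p \<notin> T" "q = tau k p" by auto
    obtain w z where pwz: "p = (w, z)" by (cases p)
    have wz: "w \<in> cube n" "z \<in> cube n" "occurs_disjointly n A B w (mix k w z)"
      "\<not> occurs_disjointly n A B w (mix (Suc k) w z)"
      using p pwz by (auto simp: S_def T_def Dk_def)
    have r: "w k \<and> \<not> z k \<and> occurs_disjointly n A B (w(k := False)) (mix (Suc k) (w(k := False)) (z(k := True)))"
      using L2[OF incA incB wz(3,4)] .
    have q: "q = (w(k := False), z(k := True))" using p(3) pwz r by (auto simp: tau_def)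
    have cq: "w(k := False) \<in> cube n" "z(k := True) \<in> cube n"
      using wz(1,2) r by (auto simp: cube_def)
    have nS: "\<not> occurs_disjointly n A B (w(k := False)) (mix k (w(k := False)) (z(k := True)))"
    proof
      assume h: "occurs_disjointly n A B (w(k := False)) (mix k (w(k := False)) (z(k := True)))"
      have "occurs_disjointly n A B w (mix (Suc k) w z)"
        by (rule L1[OF incA incB h]) auto
      then show False using wz(4) by simp
    qed
    show "q \<in> T - S" using q cq r nS by (auto simp: S_def T_def Dk_def)
  qed
  have inj: "inj_on (tau k) (S - T)"
    by (metis inj_on_inverseI tau_inv)
  have "card (S - T) \<le> card (T - S)"
    using card_inj_on_le[OF inj img] fin by auto
  moreover have "card S = card (S \<inter> T) + card (S - T)"
    using fin by (metis card_Int_Diff)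
  moreover have "card T = card (T \<inter> S) + card (T - S)"
    using fin by (metis card_Int_Diff)
  ultimately show ?thesis unfolding S_def[symmetric] T_def[symmetric]
    by (simp add: Int_commute)
qed

lemma steps:
  assumes "increasing n A" "increasing n B"
  shows "card {p \<in> cube n \<times> cube n. Dk n A B 0 p} \<le> card {p \<in> cube n \<times> cube n. Dk n A B m p}"
proof (induction m)
  case (Suc m) then show ?case using step[OF assms, of m] by linarith
qed simp

theorem mainTheorem7:
  fixes n :: nat and A B :: "(nat \<Rightarrow> bool) set"
  assumes "increasing n A" and "increasing n B"
  shows "P n (box n A B) \<le> P2 n {(\<omega>, \<xi>). occurs_disjointly n A B \<omega> \<xi>}
    \<and> P2 n {(\<omega>, \<xi>). occurs_disjointly n A B \<omega> \<xi>} \<le> P n A * P n B"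
proof
  let ?D = "{(\<omega>, \<xi>). occurs_disjointly n A B \<omega> \<xi>} \<inter> (cube n \<times> cube n)"
  have e0: "{p \<in> cube n \<times> cube n. Dk n A B 0 p} = (box n A B \<inter> cube n) \<times> cube n"
    by (auto simp: Dk_def mix_def box_def)
  have en: "{p \<in> cube n \<times> cube n. Dk n A B n p} = ?D"
  proof -
    have "w \<in> cube n \<Longrightarrow> z \<in> cube n \<Longrightarrow> mix n w z = z" for w z
      by (auto simp: mix_def cube_def fun_eq_iff)
    then show ?thesis by (auto simp: Dk_def)
  qed
  have "card (box n A B \<inter> cube n) * 2 ^ n \<le> card ?D"
    using steps[OF assms, of n] unfolding e0 en
    by (simp add: card_cartesian_product card_cube)
  then have "real (card (box n A B \<inter> cube n)) * 2 ^ n \<le> real (card ?D)"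
    by (metis of_nat_le_iff of_nat_mult of_nat_numeral of_nat_power)
  then show "P n (box n A B) \<le> P2 n {(\<omega>, \<xi>). occurs_disjointly n A B \<omega> \<xi>}"
    unfolding P_def P2_def by (simp add: field_simps)
next
  let ?D = "{(\<omega>, \<xi>). occurs_disjointly n A B \<omega> \<xi>} \<inter> (cube n \<times> cube n)"
  have sub: "?D \<subseteq> (A \<inter> cube n) \<times> (B \<inter> cube n)"
    by (auto simp: occurs_disjointly_def witness_def)
  have fin: "finite ((A \<inter> cube n) \<times> (B \<inter> cube n))" using finite_cube by auto
  have "card ?D \<le> card (A \<inter> cube n) * card (B \<inter> cube n)"
    using card_mono[OF fin sub] by (simp add: card_cartesian_product)
  then have "real (card ?D) \<le> real (card (A \<inter> cube n)) * real (card (B \<inter> cube n))"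
    by (metis of_nat_le_iff of_nat_mult)
  then show "P2 n {(\<omega>, \<xi>). occurs_disjointly n A B \<omega> \<xi>} \<le> P n A * P n B"
    unfolding P_def P2_def by (simp add: field_simps)
qed

end
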